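(* For every $n\ge1$: $2r_n\in C(2r_{n+1})$, $4r_n\in C(4r_{n+1})$, $2t_n\in C(2t_{n+1})$, $2s_n\in C(2s_{n+1})$, $2p_n\in C(2p_{n+1})$, $2q_n\in C(2q_{n+1})$, $2u_n\in C(2u_{n+1})$ and $2w_n\in C(2w_{n+1})$. For every $n\ge 2$: $2v_n\in C(2v_{n+1})$.
   Context: All operations are on $\mathbb{Z}_8$. For an operation $f$, $C(f)$ denotes the clone generated by $f$ together with binary addition and all unary constant operations. For $n\ge1$: $r_n=x_1\cdots x_n$; $t_n=x_1\cdots x_n(x_1+\dots+x_n)$ if $n$ is even and $t_n=x_1\cdots x_n(x_1+\dots+x_n+1)$ if $n$ is odd; $s_n=x_1\cdots x_n(x_1+\dots+x_n)$ if $n$ is odd and $s_n=x_1\cdots x_n(x_1+\dots+x_n+1)$ if $n$ is even; $p_n=x_1^2x_2\cdots x_n$; $q_n=x_1^3x_2\cdots x_n$; $w_n=x_1\cdots x_n(x_1^2+1)$; $u_n=x_1\cdots x_n(x_1+1)$; for $n\ge 2$, $v_n=x_1\cdots x_n(x_1+x_2)$. *)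

theory Defs
  imports "HOL-Library.Numeral_Type"
begin

text \<open>An operation of arity n on a set A is encoded as a pair (n, f) where
  f :: (nat => A) => A only depends on the arguments x 0, ..., x (n-1).\<close>
type_synonym 'a op = "nat \<times> ((nat \<Rightarrow> 'a) \<Rightarrow> 'a)"

inductive_set clone_gen :: "'a op set \<Rightarrow> 'a op set" for F :: "'a op set" where
  proj: "i < n \<Longrightarrow> (n, \<lambda>x. x i) \<in> clone_gen F"
| gen: "p \<in> F \<Longrightarrow> p \<in> clone_gen F"
| comp: "(m, f) \<in> clone_gen F \<Longrightarrow> (\<forall>i<m. (n, g i) \<in> clone_gen F)
          \<Longrightarrow> (n, \<lambda>x. f (\<lambda>i. g i x)) \<in> clone_gen F"

definition C :: "8 op \<Rightarrow> 8 op set" where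
  "C f = clone_gen ({f, (2, \<lambda>x. x 0 + x 1)} \<union> {(1, \<lambda>x. c) | c. True})"

definition rr :: "nat \<Rightarrow> (nat \<Rightarrow> 8) \<Rightarrow> 8" where
  "rr n x = (\<Prod>i<n. x i)"

definition tt :: "nat \<Rightarrow> (nat \<Rightarrow> 8) \<Rightarrow> 8" where
  "tt n x = (if even n then rr n x * (\<Sum>i<n. x i) else rr n x * ((\<Sum>i<n. x i) + 1))"

definition ss :: "nat \<Rightarrow> (nat \<Rightarrow> 8) \<Rightarrow> 8" where
  "ss n x = (if odd n then rr n x * (\<Sum>i<n. x i) else rr n x * ((\<Sum>i<n. x i) + 1))"

definition pp :: "nat \<Rightarrow> (nat \<Rightarrow> 8) \<Rightarrow> 8" where
  "pp n x = x 0 ^ 2 * (\<Prod>i\<in>{1..<n}. x i)"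

definition qq :: "nat \<Rightarrow> (nat \<Rightarrow> 8) \<Rightarrow> 8" where
  "qq n x = x 0 ^ 3 * (\<Prod>i\<in>{1..<n}. x i)"

definition ww :: "nat \<Rightarrow> (nat \<Rightarrow> 8) \<Rightarrow> 8" where
  "ww n x = rr n x * (x 0 ^ 2 + 1)"

definition uu :: "nat \<Rightarrow> (nat \<Rightarrow> 8) \<Rightarrow> 8" where
  "uu n x = rr n x * (x 0 + 1)"

definition vv :: "nat \<Rightarrow> (nat \<Rightarrow> 8) \<Rightarrow> 8" where
  "vv n x = rr n x * (x 0 + x 1)"

definition sop :: "8 \<Rightarrow> (nat \<Rightarrow> (nat \<Rightarrow> 8) \<Rightarrow> 8) \<Rightarrow> nat \<Rightarrow> 8 op" where
  "sop c h n = (n, \<lambda>x. c * h n x)"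

end

theory Submission
  imports Defs
begin

lemma gen_in: "p \<in> F \<Longrightarrow> p \<in> C q \<Longrightarrow> True" by simp

lemma const_in: assumes "n \<ge> 1" shows "(n, \<lambda>x. c) \<in> C h"
proof -
  have A: "(1, \<lambda>x. c) \<in> C h" unfolding C_def by (rule clone_gen.gen) auto
  moreover have B: "\<forall>i<(1::nat). (n, (\<lambda>i. \<lambda>x. x 0) i) \<in> C h"
    using assms unfolding C_def by (auto intro: clone_gen.proj)
  ultimately have "(n, \<lambda>x. (\<lambda>x. c) (\<lambda>i::nat. (\<lambda>i. \<lambda>x. x 0) i x)) \<in> C h"
    using clone_gen.comp[OF A[unfolded C_def] B[unfolded C_def]] unfolding C_def by simp
  then show ?thesis by simp
qed

lemma add_in: assumes "(n, f) \<in> C h" "(n, g) \<in> C h" shows "(n, \<lambda>x. f x + g x) \<in> C h"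
proof -
  have A: "(2, \<lambda>x. x 0 + x 1) \<in> C h" unfolding C_def by (rule clone_gen.gen) auto
  moreover have B: "\<forall>i<(2::nat). (n, (\<lambda>i. if i = 0 then f else g) i) \<in> C h"
    using assms by (auto simp: less_2_cases_iff)
  ultimately have "(n, \<lambda>x. (\<lambda>x. x 0 + x 1) (\<lambda>i::nat. (\<lambda>i. if i = 0 then f else g) i x)) \<in> C h"
    using clone_gen.comp[OF A[unfolded C_def] B[unfolded C_def]] unfolding C_def by simp
  then show ?thesis by simp
qed

lemma seven_in: assumes "(n, f) \<in> C h" shows "(n, \<lambda>x. 7 * f x) \<in> C h"
proof -
  have a2: "(n, \<lambda>x. f x + f x) \<in> C h" using add_in[OF assms assms] .
  have a4: "(n, \<lambda>x. (f x + f x) + (f x + f x)) \<in> C h" using add_in[OF a2 a2] .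
  have a6: "(n, \<lambda>x. ((f x + f x) + (f x + f x)) + (f x + f x)) \<in> C h" using add_in[OF a4 a2] .
  have "(n, \<lambda>x. (((f x + f x) + (f x + f x)) + (f x + f x)) + f x) \<in> C h" using add_in[OF a6 assms] .
  moreover have "(\<lambda>x. (((f x + f x) + (f x + f x)) + (f x + f x)) + f x) = (\<lambda>x. 7 * f x)"
    by (rule ext) (simp add: algebra_simps)
  ultimately show ?thesis by simp
qed

lemma subst_in: assumes "(Suc n, F) \<in> C h" "n \<ge> 1"
  shows "(n, \<lambda>x. F (\<lambda>i. if i < n then x i else c)) \<in> C h"
proof -
  have "\<forall>i<Suc n. (n, (\<lambda>i. if i < n then (\<lambda>x. x i) else (\<lambda>x. c)) i) \<in> C h"
    using assms(2) const_in unfolding C_def by (auto intro: clone_gen.proj simp: C_def)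
  from clone_gen.comp[OF assms(1)[unfolded C_def] this[unfolded C_def]]
  have "(n, \<lambda>x. F (\<lambda>i. (if i < n then (\<lambda>x. x i) else (\<lambda>x. c)) x)) \<in> C h"
    unfolding C_def .
  moreover have "(\<lambda>x. F (\<lambda>i. (if i < n then (\<lambda>x. x i) else (\<lambda>x. c)) x)) = (\<lambda>x. F (\<lambda>i. if i < n then x i else c))"
    by (intro ext arg_cong[where f=F]) simp
  ultimately show ?thesis by simp
qed

lemma subst_sop: assumes "n \<ge> 1"
  and "\<And>x. f (\<lambda>i. if i < n then x i else c) = g x"
  shows "(n, g) \<in> C (Suc n, f)"
proof -
  have "(Suc n, f) \<in> C (Suc n, f)" unfolding C_def by (rule clone_gen.gen) auto
  from subst_in[OF this assms(1), of c] show ?thesis using assms(2) by simp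
qed

lemma rr_S: "rr (Suc n) (\<lambda>i. if i < n then x i else c) = rr n x * c"
  unfolding rr_def by (simp add: lessThan_Suc_atMost[symmetric] del: lessThan_Suc_atMost)

lemma sum_S: "(\<Sum>i<Suc n. (\<lambda>i. if i < n then x i else c) i) = (\<Sum>i<n. x i) + c"
  by simp

lemma prod1_S: "n \<ge> 1 \<Longrightarrow> (\<Prod>i\<in>{1..<Suc n}. (\<lambda>i. if i < n then x i else (c::8)) i) = (\<Prod>i\<in>{1..<n}. x i) * c"
  by (simp add: prod.atLeastLessThan_Suc)

lemma test: "(7::8) * 2 * 7 = 2" "(8::8) = 0" "(2::8)*8 = 0" by simp_all

lemma subst_sop7: assumes "n \<ge> 1"
  and "\<And>x. 7 * f (\<lambda>i. if i < n then x i else c) = g x"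
  shows "(n, g) \<in> C (Suc n, f)"
proof -
  have "(Suc n, f) \<in> C (Suc n, f)" unfolding C_def by (rule clone_gen.gen) auto
  from seven_in[OF subst_in[OF this assms(1), of c]] show ?thesis using assms(2) by simp
qed

lemma e8: "(8::8) = 0" "(96::8) = 0" "(98::8) = 2" by simp_all

theorem lemma4p2:
  shows "(\<forall>n\<ge>1.
            sop 2 rr n \<in> C (sop 2 rr (Suc n)) \<and>
            sop 4 rr n \<in> C (sop 4 rr (Suc n)) \<and>
            sop 2 tt n \<in> C (sop 2 tt (Suc n)) \<and>
            sop 2 ss n \<in> C (sop 2 ss (Suc n)) \<and>
            sop 2 pp n \<in> C (sop 2 pp (Suc n)) \<and>
            sop 2 qq n \<in> C (sop 2 qq (Suc n)) \<and>
            sop 2 uu n \<in> C (sop 2 uu (Suc n)) \<and>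
            sop 2 ww n \<in> C (sop 2 ww (Suc n))) \<and>
         (\<forall>n\<ge>2. sop 2 vv n \<in> C (sop 2 vv (Suc n)))"
proof (intro conjI allI impI)
  fix n :: nat assume n: "n \<ge> 1"
  show "sop 2 rr n \<in> C (sop 2 rr (Suc n))" unfolding sop_def
    by (rule subst_sop[OF n, where c=1]) (simp add: rr_S)
  show "sop 4 rr n \<in> C (sop 4 rr (Suc n))" unfolding sop_def
    by (rule subst_sop[OF n, where c=1]) (simp add: rr_S)
  show "sop 2 pp n \<in> C (sop 2 pp (Suc n))" unfolding sop_def
    using n by (intro subst_sop[OF n, where c=1]) (simp add: pp_def prod1_S)
  show "sop 2 qq n \<in> C (sop 2 qq (Suc n))" unfolding sop_def
    using n by (intro subst_sop[OF n, where c=1]) (simp add: qq_def prod1_S)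
  show "sop 2 uu n \<in> C (sop 2 uu (Suc n))" unfolding sop_def
    using n by (intro subst_sop[OF n, where c=1]) (simp add: uu_def rr_S)
  show "sop 2 ww n \<in> C (sop 2 ww (Suc n))" unfolding sop_def
    using n by (intro subst_sop[OF n, where c=1]) (simp add: ww_def rr_S)
  show "sop 2 tt n \<in> C (sop 2 tt (Suc n))" unfolding sop_def
  proof (cases "even n")
    case True
    show "(n, \<lambda>x. 2 * tt n x) \<in> C (Suc n, \<lambda>x. 2 * tt (Suc n) x)"
      using True by (intro subst_sop7[OF n, where c=7])
        (simp add: tt_def rr_S algebra_simps e8)
  next
    case False
    show "(n, \<lambda>x. 2 * tt n x) \<in> C (Suc n, \<lambda>x. 2 * tt (Suc n) x)"
      using False by (intro subst_sop[OF n, where c=1])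
        (simp add: tt_def rr_S algebra_simps)
  qed
  show "sop 2 ss n \<in> C (sop 2 ss (Suc n))" unfolding sop_def
  proof (cases "even n")
    case True
    show "(n, \<lambda>x. 2 * ss n x) \<in> C (Suc n, \<lambda>x. 2 * ss (Suc n) x)"
      using True by (intro subst_sop[OF n, where c=1])
        (simp add: ss_def rr_S algebra_simps)
  next
    case False
    show "(n, \<lambda>x. 2 * ss n x) \<in> C (Suc n, \<lambda>x. 2 * ss (Suc n) x)"
      using False by (intro subst_sop7[OF n, where c=7])
        (simp add: ss_def rr_S algebra_simps e8)
  qed
next
  fix n :: nat assume n: "n \<ge> 2"
  then have n1: "n \<ge> 1" by simp
  show "sop 2 vv n \<in> C (sop 2 vv (Suc n))" unfolding sop_def
    using n by (intro subst_sop[OF n1, where c=1]) (simp add: vv_def rr_S)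
qed

end
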